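(* Let $h,n\geq2$ and let $A_h$ be the alternating group. (i) If $h\leq n!$, then $O(A_h\times\{id\})=A_h\times\{id\}$. (ii) If $h>n!$, then $O(A_h\times\{id\})=S_h\times\{id\}$. (iii) $A_h\times\{id\}$ is an anonymity group with respect to $(h,n)$ if and only if $h\leq n!$.
   Context: Permutations compose as $(\sigma\tau)(x)=\sigma(\tau(x))$. Let $G=S_h\times S_n$ and $\mathcal{P}=(S_n)^h$ (preference profiles), with $G$ acting by $(p^{(\varphi,\psi)})_i=\psi\,p_{\varphi^{-1}(i)}$; $p^U=\{p^g:g\in U\}$. $U\leq G$ is regular if for every $p$, $\{g\in U:p^g=p\}\subseteq S_h\times\{id\}$. For regular $U$, $\mathcal{A}(U)$ is the set of regular $V\leq G$ with $V\geq U$ and $p^V\subseteq p^U$ for all $p$, and $O(U)=\langle\mathcal{A}(U)\rangle$. A social preference function (SPF) is any $F:\mathcal{P}\to S_n$; $G(F)=\{(\varphi,\psi)\in G: F(p^{(\varphi,\psi)})=\psi F(p)\ \forall p\}$ and $G_1(F)=G(F)\cap(S_h\times\{id\})$; $U\leq S_h\times\{id\}$ is an anonymity group with respect to $(h,n)$ if $U=G_1(F)$ for some SPF $F$. *)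

theory Defs
  imports "HOL-Combinatorics.Permutations"
begin

(* Voters are 0..<h, alternatives are 0..<n. Group elements are pairs (phi, psi). *)
type_synonym perm = "nat \<Rightarrow> nat"
type_synonym profile = "nat \<Rightarrow> perm"

definition Gh :: "nat \<Rightarrow> nat \<Rightarrow> (perm \<times> perm) set" where
  "Gh h n = {(\<phi>, \<psi>). \<phi> permutes {..<h} \<and> \<psi> permutes {..<n}}"

definition Sh_id :: "nat \<Rightarrow> (perm \<times> perm) set" where
  "Sh_id h = {(\<phi>, id) | \<phi>. \<phi> permutes {..<h}}"

definition Ah_id :: "nat \<Rightarrow> (perm \<times> perm) set" where
  "Ah_id h = {(\<phi>, id) | \<phi>. \<phi> permutes {..<h} \<and> evenperm \<phi>}"

definition gmult :: "perm \<times> perm \<Rightarrow> perm \<times> perm \<Rightarrow> perm \<times> perm" where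
  "gmult g k = (fst g \<circ> fst k, snd g \<circ> snd k)"

definition ginv :: "perm \<times> perm \<Rightarrow> perm \<times> perm" where
  "ginv g = (inv (fst g), inv (snd g))"

definition is_subgroup :: "nat \<Rightarrow> nat \<Rightarrow> (perm \<times> perm) set \<Rightarrow> bool" where
  "is_subgroup h n V \<longleftrightarrow> V \<subseteq> Gh h n \<and> (id, id) \<in> V \<and>
     (\<forall>g\<in>V. \<forall>k\<in>V. gmult g k \<in> V) \<and> (\<forall>g\<in>V. ginv g \<in> V)"

definition gen_subgroup :: "nat \<Rightarrow> nat \<Rightarrow> (perm \<times> perm) set \<Rightarrow> (perm \<times> perm) set" where
  "gen_subgroup h n X = \<Inter>{V. is_subgroup h n V \<and> X \<subseteq> V}"

definition profiles :: "nat \<Rightarrow> nat \<Rightarrow> profile set" where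
  "profiles h n = {p. (\<forall>i<h. p i permutes {..<n}) \<and> (\<forall>i\<ge>h. p i = id)}"

definition act :: "nat \<Rightarrow> profile \<Rightarrow> perm \<times> perm \<Rightarrow> profile" where
  "act h p g = (\<lambda>i. if i < h then snd g \<circ> p (inv (fst g) i) else id)"

definition orbit_U :: "nat \<Rightarrow> profile \<Rightarrow> (perm \<times> perm) set \<Rightarrow> profile set" where
  "orbit_U h p U = (\<lambda>g. act h p g) ` U"

definition regular :: "nat \<Rightarrow> nat \<Rightarrow> (perm \<times> perm) set \<Rightarrow> bool" where
  "regular h n U \<longleftrightarrow> is_subgroup h n U \<and>
     (\<forall>p\<in>profiles h n. {g\<in>U. act h p g = p} \<subseteq> Sh_id h)"

definition Aset :: "nat \<Rightarrow> nat \<Rightarrow> (perm \<times> perm) set \<Rightarrow> (perm \<times> perm) set set" where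
  "Aset h n U = {V. regular h n V \<and> U \<subseteq> V \<and>
      (\<forall>p\<in>profiles h n. orbit_U h p V \<subseteq> orbit_U h p U)}"

definition Ogrp :: "nat \<Rightarrow> nat \<Rightarrow> (perm \<times> perm) set \<Rightarrow> (perm \<times> perm) set" where
  "Ogrp h n U = gen_subgroup h n (\<Union>(Aset h n U))"

definition is_SPF :: "nat \<Rightarrow> nat \<Rightarrow> (profile \<Rightarrow> perm) \<Rightarrow> bool" where
  "is_SPF h n F \<longleftrightarrow> (\<forall>p\<in>profiles h n. F p permutes {..<n})"

definition GF :: "nat \<Rightarrow> nat \<Rightarrow> (profile \<Rightarrow> perm) \<Rightarrow> (perm \<times> perm) set" where
  "GF h n F = {g\<in>Gh h n. \<forall>p\<in>profiles h n. F (act h p g) = snd g \<circ> F p}"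

definition G1F :: "nat \<Rightarrow> nat \<Rightarrow> (profile \<Rightarrow> perm) \<Rightarrow> (perm \<times> perm) set" where
  "G1F h n F = GF h n F \<inter> Sh_id h"

definition anonymity_group :: "nat \<Rightarrow> nat \<Rightarrow> (perm \<times> perm) set \<Rightarrow> bool" where
  "anonymity_group h n U \<longleftrightarrow> U \<subseteq> Sh_id h \<and> is_subgroup h n U \<and>
     (\<exists>F. is_SPF h n F \<and> U = G1F h n F)"

end

theory Submission
  imports Defs
begin

lemma perm_lt: "\<phi> permutes {..<h} \<Longrightarrow> i < h \<Longrightarrow> \<phi> i < h"
  using permutes_in_image[of \<phi> "{..<h}" i] by simp

lemma perm_inv_lt: "\<phi> permutes {..<h} \<Longrightarrow> i < h \<Longrightarrow> inv \<phi> i < h"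
  by (rule perm_lt[OF permutes_inv])

lemma perm_ev: "\<phi> permutes {..<h::nat} \<Longrightarrow> permutation \<phi>"
  by (rule permutes_imp_permutation[of "{..<h}"]) simp_all

lemma gen_self: "is_subgroup h n V \<Longrightarrow> gen_subgroup h n V = V"
  unfolding gen_subgroup_def by blast

lemma Sh_mem: "(a, b) \<in> Sh_id h \<longleftrightarrow> a permutes {..<h} \<and> b = id"
  unfolding Sh_id_def by blast

lemma Ah_mem: "(a, b) \<in> Ah_id h \<longleftrightarrow> a permutes {..<h} \<and> evenperm a \<and> b = id"
  unfolding Ah_id_def by blast

lemma Sh_sub: "is_subgroup h n (Sh_id h)"
  unfolding is_subgroup_def
proof (intro conjI ballI)
  show "Sh_id h \<subseteq> Gh h n" unfolding Sh_id_def Gh_def by auto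
  show "(id, id) \<in> Sh_id h" unfolding Sh_mem by simp
  fix g k assume "g \<in> Sh_id h" "k \<in> Sh_id h"
  then obtain a b where ab: "g = (a, id)" "k = (b, id)" "a permutes {..<h}" "b permutes {..<h}"
    unfolding Sh_id_def by blast
  have "gmult g k = (a \<circ> b, id)" unfolding ab gmult_def by simp
  moreover have "a \<circ> b permutes {..<h}" using ab(4,3) by (rule permutes_compose)
  ultimately show "gmult g k \<in> Sh_id h" by (simp add: Sh_mem)
next
  fix g assume "g \<in> Sh_id h"
  then obtain a where a: "g = (a, id)" "a permutes {..<h}"
    unfolding Sh_id_def by blast
  have "ginv g = (inv a, id)" unfolding a ginv_def by (simp add: inv_id)
  moreover have "inv a permutes {..<h}" using a(2) by (rule permutes_inv)
  ultimately show "ginv g \<in> Sh_id h" by (simp add: Sh_mem)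
qed

lemma Ah_sub: "is_subgroup h n (Ah_id h)"
  unfolding is_subgroup_def
proof (intro conjI ballI)
  show "Ah_id h \<subseteq> Gh h n" unfolding Ah_id_def Gh_def by auto
  show "(id, id) \<in> Ah_id h" unfolding Ah_mem by (simp add: evenperm_id)
  fix g k assume "g \<in> Ah_id h" "k \<in> Ah_id h"
  then obtain a b where ab: "g = (a, id)" "k = (b, id)" "a permutes {..<h}" "b permutes {..<h}"
     "evenperm a" "evenperm b"
    unfolding Ah_id_def by blast
  have "evenperm (a \<circ> b)" using ab by (simp add: evenperm_comp perm_ev)
  moreover have "gmult g k = (a \<circ> b, id)" unfolding ab gmult_def by simp
  moreover have "a \<circ> b permutes {..<h}" using ab(4,3) by (rule permutes_compose)
  ultimately show "gmult g k \<in> Ah_id h" by (simp add: Ah_mem)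
next
  fix g assume "g \<in> Ah_id h"
  then obtain a where a: "g = (a, id)" "a permutes {..<h}" "evenperm a"
    unfolding Ah_id_def by blast
  have "evenperm (inv a)" using a by (simp add: evenperm_inv perm_ev)
  moreover have "ginv g = (inv a, id)" unfolding a ginv_def by (simp add: inv_id)
  moreover have "inv a permutes {..<h}" using a(2) by (rule permutes_inv)
  ultimately show "ginv g \<in> Ah_id h" by (simp add: Ah_mem)
qed

lemma Ah_Sh: "Ah_id h \<subseteq> Sh_id h"
  unfolding Ah_id_def Sh_id_def by blast

lemma Sh_reg: "regular h n (Sh_id h)"
  unfolding regular_def using Sh_sub by blast

lemma Ah_reg: "regular h n (Ah_id h)"
  unfolding regular_def using Ah_sub Ah_Sh by blast

lemma act_id: "i < h \<Longrightarrow> act h p (\<phi>, id) i = p (inv \<phi> i)"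
  unfolding act_def by simp

lemma act_ge: "\<not> i < h \<Longrightarrow> act h p g i = id"
  unfolding act_def by simp

lemma act_eqI: "(\<And>i. i < h \<Longrightarrow> act h p g i = act h p k i) \<Longrightarrow> act h p g = act h p k"
  by (rule ext) (metis act_ge)

lemma Aset_Sh:
  assumes "h \<ge> 1" "V \<in> Aset h n (Ah_id h)"
  shows "V \<subseteq> Sh_id h"
proof
  fix g assume g: "g \<in> V"
  obtain \<phi> \<psi> where gg: "g = (\<phi>, \<psi>)" by fastforce
  have V: "regular h n V" "\<forall>p\<in>profiles h n. orbit_U h p V \<subseteq> orbit_U h p (Ah_id h)"
    using assms(2) unfolding Aset_def by auto
  have "V \<subseteq> Gh h n" using V(1) unfolding regular_def is_subgroup_def by blast
  hence phi: "\<phi> permutes {..<h}" using g gg unfolding Gh_def by auto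
  define c :: profile where "c = (\<lambda>i. id)"
  have c: "c \<in> profiles h n" unfolding c_def profiles_def by auto
  have "act h c g \<in> orbit_U h c (Ah_id h)" using V(2) c g unfolding orbit_U_def by blast
  then obtain u where u: "u \<in> Ah_id h" "act h c g = act h c u" unfolding orbit_U_def by blast
  have "snd u = id" using u(1) unfolding Ah_id_def by auto
  hence "act h c u 0 = id" using assms(1) unfolding act_def c_def by simp
  moreover have "act h c g 0 = \<psi>" using assms(1) unfolding act_def c_def gg by simp
  ultimately have "\<psi> = id" using u(2) by simp
  thus "g \<in> Sh_id h" using phi gg unfolding Sh_id_def by auto
qed

lemma inj_profile:
  assumes "h \<le> fact n"
  obtains p where "p \<in> profiles h n" "inj_on p {..<h}"
proof -
  have fin: "finite {q. q permutes {..<n}}" by (rule finite_permutations) simp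
  have "card {q. q permutes {..<n}} = fact n" by (rule card_permutations) simp_all
  hence "card {..<h} \<le> card {q. q permutes {..<n}}" using assms by simp
  then obtain f where f: "f ` {..<h} \<subseteq> {q. q permutes {..<n}}" "inj_on f {..<h}"
    using card_le_inj[OF _ fin] by blast
  define p where "p = (\<lambda>i. if i < h then f i else id)"
  have "p \<in> profiles h n" using f(1) unfolding p_def profiles_def by auto
  moreover have "inj_on p {..<h}" using f(2) unfolding p_def inj_on_def by auto
  ultimately show ?thesis using that by blast
qed

lemma Aset_Ah:
  assumes "h \<ge> 1" "h \<le> fact n" "V \<in> Aset h n (Ah_id h)"
  shows "V \<subseteq> Ah_id h"
proof
  fix g assume g: "g \<in> V"
  then obtain \<phi> where gg: "g = (\<phi>, id)" and phi: "\<phi> permutes {..<h}"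
    using Aset_Sh[OF assms(1,3)] unfolding Sh_id_def by blast
  have V: "\<forall>p\<in>profiles h n. orbit_U h p V \<subseteq> orbit_U h p (Ah_id h)"
    using assms(3) unfolding Aset_def by auto
  obtain p where p: "p \<in> profiles h n" "inj_on p {..<h}" using inj_profile[OF assms(2)] by blast
  have "act h p g \<in> orbit_U h p (Ah_id h)" using V p g unfolding orbit_U_def by blast
  then obtain \<alpha> where al: "\<alpha> permutes {..<h}" "evenperm \<alpha>" "act h p g = act h p (\<alpha>, id)"
    unfolding orbit_U_def Ah_id_def by blast
  have "inv \<phi> = inv \<alpha>"
  proof
    fix i show "inv \<phi> i = inv \<alpha> i"
    proof (cases "i < h")
      case True
      have "p (inv \<phi> i) = p (inv \<alpha> i)" using al(3) act_id[OF True] gg by metis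
      then show ?thesis using p(2) perm_inv_lt[OF phi True] perm_inv_lt[OF al(1) True]
        unfolding inj_on_def by blast
    next
      case False
      then show ?thesis using permutes_not_in[OF permutes_inv[OF phi]]
          permutes_not_in[OF permutes_inv[OF al(1)]] by simp
    qed
  qed
  hence "\<phi> = \<alpha>" using permutes_inv_inv[OF phi] permutes_inv_inv[OF al(1)] by metis
  thus "g \<in> Ah_id h" using gg al unfolding Ah_id_def by blast
qed

lemma part1:
  assumes "h \<ge> 1" "h \<le> fact n"
  shows "Ogrp h n (Ah_id h) = Ah_id h"
proof -
  have "Ah_id h \<in> Aset h n (Ah_id h)" unfolding Aset_def using Ah_reg by blast
  hence "\<Union>(Aset h n (Ah_id h)) = Ah_id h" using Aset_Ah[OF assms] by blast
  thus ?thesis unfolding Ogrp_def using gen_self[OF Ah_sub] by simp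
qed

lemma not_inj_profile:
  assumes "h > fact n" "p \<in> profiles h n"
  obtains i j where "i < h" "j < h" "i \<noteq> j" "p i = p j"
proof -
  have fin: "finite {q. q permutes {..<n}}" by (rule finite_permutations) simp
  have c: "card {q. q permutes {..<n}} = fact n" by (rule card_permutations) simp_all
  have sub: "p ` {..<h} \<subseteq> {q. q permutes {..<n}}" using assms(2) unfolding profiles_def by auto
  have "\<not> inj_on p {..<h}"
  proof
    assume "inj_on p {..<h}"
    hence "card {..<h} \<le> card {q. q permutes {..<n}}" using card_inj_on_le[OF _ sub fin] by blast
    thus False using c assms(1) by simp
  qed
  thus ?thesis using that unfolding inj_on_def by blast
qed

lemma L_rep:
  assumes "h > fact n" "p \<in> profiles h n" "\<phi> permutes {..<h}"
  shows "\<exists>\<alpha>. \<alpha> permutes {..<h} \<and> evenperm \<alpha> \<and> act h p (\<phi>, id) = act h p (\<alpha>, id)"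
proof (cases "evenperm \<phi>")
  case True then show ?thesis using assms(3) by blast
next
  case False
  obtain i j where ij: "i < h" "j < h" "i \<noteq> j" "p i = p j" using not_inj_profile[OF assms(1,2)] .
  define \<tau> where "\<tau> = transpose i j"
  have tp: "\<tau> permutes {..<h}" unfolding \<tau>_def using ij by (intro permutes_swap_id) auto
  define \<alpha> where "\<alpha> = \<phi> \<circ> \<tau>"
  have ap: "\<alpha> permutes {..<h}" unfolding \<alpha>_def using tp assms(3) by (rule permutes_compose)
  have ae: "evenperm \<alpha>" unfolding \<alpha>_def using False ij(3)
    by (simp add: evenperm_comp perm_ev[OF assms(3)] perm_ev[OF tp]) (simp add: \<tau>_def evenperm_swap)
  have inv\<alpha>: "inv \<alpha> = \<tau> \<circ> inv \<phi>"
    unfolding \<alpha>_def using o_inv_distrib[of \<phi> \<tau>] permutes_bij[OF assms(3)] permutes_bij[OF tp]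
    by (simp add: \<tau>_def)
  have pt: "p (\<tau> x) = p x" for x
    unfolding \<tau>_def using ij(4) by (simp add: transpose_def)
  have "act h p (\<phi>, id) = act h p (\<alpha>, id)"
    by (rule act_eqI) (simp add: act_id inv\<alpha> pt)
  then show ?thesis using ap ae by blast
qed

lemma part2:
  assumes "h \<ge> 1" "h > fact n"
  shows "Ogrp h n (Ah_id h) = Sh_id h"
proof -
  have "\<forall>p\<in>profiles h n. orbit_U h p (Sh_id h) \<subseteq> orbit_U h p (Ah_id h)"
  proof (intro ballI subsetI)
    fix p q assume p: "p \<in> profiles h n" and "q \<in> orbit_U h p (Sh_id h)"
    then obtain \<phi> where phi: "\<phi> permutes {..<h}" "q = act h p (\<phi>, id)"
      unfolding orbit_U_def Sh_id_def by blast
    then obtain \<alpha> where "\<alpha> permutes {..<h} \<and> evenperm \<alpha> \<and> q = act h p (\<alpha>, id)"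
      using L_rep[OF assms(2) p phi(1)] by metis
    thus "q \<in> orbit_U h p (Ah_id h)" unfolding orbit_U_def Ah_id_def by blast
  qed
  hence "Sh_id h \<in> Aset h n (Ah_id h)" unfolding Aset_def using Sh_reg Ah_Sh by blast
  hence "\<Union>(Aset h n (Ah_id h)) = Sh_id h" using Aset_Sh[OF assms(1)] by blast
  thus ?thesis unfolding Ogrp_def using gen_self[OF Sh_sub] by simp
qed

lemma part3a:
  assumes "h \<ge> 2" "anonymity_group h n (Ah_id h)"
  shows "h \<le> fact n"
proof (rule ccontr)
  assume "\<not> h \<le> fact n"
  hence hn: "h > fact n" by simp
  obtain F where F: "is_SPF h n F" "Ah_id h = G1F h n F"
    using assms(2) unfolding anonymity_group_def by blast
  define \<tau> where "\<tau> = transpose (0::nat) 1"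
  have tp: "\<tau> permutes {..<h}" unfolding \<tau>_def using assms(1) by (intro permutes_swap_id) auto
  have "(\<tau>, id) \<in> G1F h n F"
    unfolding G1F_def GF_def
  proof (intro IntI CollectI conjI ballI)
    show "(\<tau>, id) \<in> Gh h n" using tp unfolding Gh_def by auto
    show "(\<tau>, id) \<in> Sh_id h" using tp unfolding Sh_id_def by auto
    fix p assume p: "p \<in> profiles h n"
    obtain \<alpha> where al: "\<alpha> permutes {..<h}" "evenperm \<alpha>" "act h p (\<tau>, id) = act h p (\<alpha>, id)"
      using L_rep[OF hn p tp] by blast
    have "(\<alpha>, id) \<in> Ah_id h" using al unfolding Ah_id_def by blast
    hence "(\<alpha>, id) \<in> G1F h n F" by (simp only: F(2))
    hence "\<forall>p\<in>profiles h n. F (act h p (\<alpha>, id)) = snd (\<alpha>, id) \<circ> F p" unfolding G1F_def GF_def by simp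
    hence "F (act h p (\<alpha>, id)) = snd (\<alpha>, id) \<circ> F p" using p by blast
    thus "F (act h p (\<tau>, id)) = snd (\<tau>, id) \<circ> F p" using al(3) by simp
  qed
  hence "(\<tau>, id) \<in> Ah_id h" by (simp only: F(2))
  hence "evenperm \<tau>" unfolding Ah_id_def by simp
  thus False unfolding \<tau>_def by (simp add: evenperm_swap)
qed

definition orbR :: "nat \<Rightarrow> profile \<Rightarrow> profile set" where
  "orbR h p = {q. \<exists>\<sigma>. \<sigma> permutes {..<h} \<and> (\<forall>i<h. q i = p (\<sigma> i))}"

definition repr :: "nat \<Rightarrow> profile \<Rightarrow> profile" where
  "repr h p = (SOME q. q \<in> orbR h p)"

definition oddp :: "nat \<Rightarrow> profile \<Rightarrow> bool" where
  "oddp h p \<longleftrightarrow> (\<exists>\<sigma>. \<sigma> permutes {..<h} \<and> \<not> evenperm \<sigma> \<and> (\<forall>i<h. repr h p i = p (\<sigma> i)))"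

definition Fc :: "nat \<Rightarrow> profile \<Rightarrow> perm" where
  "Fc h p = (if inj_on p {..<h} \<and> oddp h p then transpose 0 1 else id)"

lemma orbR_cong:
  assumes "\<phi> permutes {..<h}" "\<forall>i<h. p' i = p (\<phi> i)"
  shows "orbR h p' = orbR h p"
proof
  show "orbR h p' \<subseteq> orbR h p"
  proof
    fix q assume "q \<in> orbR h p'"
    then obtain \<sigma> where s: "\<sigma> permutes {..<h}" "\<forall>i<h. q i = p' (\<sigma> i)" unfolding orbR_def by blast
    have "\<forall>i<h. q i = p ((\<phi> \<circ> \<sigma>) i)" using s assms(2) perm_lt[OF s(1)] by simp
    moreover have "\<phi> \<circ> \<sigma> permutes {..<h}" using s(1) assms(1) by (rule permutes_compose)
    ultimately show "q \<in> orbR h p" unfolding orbR_def by blast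
  qed
next
  show "orbR h p \<subseteq> orbR h p'"
  proof
    fix q assume "q \<in> orbR h p"
    then obtain \<sigma> where s: "\<sigma> permutes {..<h}" "\<forall>i<h. q i = p (\<sigma> i)" unfolding orbR_def by blast
    have "\<forall>i<h. q i = p' ((inv \<phi> \<circ> \<sigma>) i)"
      using s assms(2) perm_lt[OF s(1)] perm_inv_lt[OF assms(1)] permutes_inverses(1)[OF assms(1)]
      by simp
    moreover have "inv \<phi> \<circ> \<sigma> permutes {..<h}" using s(1) permutes_inv[OF assms(1)] by (rule permutes_compose)
    ultimately show "q \<in> orbR h p'" unfolding orbR_def by blast
  qed
qed

lemma repr_in: "repr h p \<in> orbR h p"
proof -
  have "p \<in> orbR h p" unfolding orbR_def by (rule CollectI, rule exI[of _ id]) simp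
  thus ?thesis unfolding repr_def by (rule someI[where P="\<lambda>q. q \<in> orbR h p"])
qed

lemma perm_uniq:
  assumes "inj_on p {..<h}" "\<sigma> permutes {..<h}" "\<tau> permutes {..<h}" "\<forall>i<h. p (\<sigma> i) = p (\<tau> i)"
  shows "\<sigma> = \<tau>"
proof
  fix i show "\<sigma> i = \<tau> i"
  proof (cases "i < h")
    case True
    then show ?thesis using assms perm_lt[OF assms(2) True] perm_lt[OF assms(3) True]
      unfolding inj_on_def by blast
  next
    case False
    then show ?thesis using permutes_not_in[OF assms(2)] permutes_not_in[OF assms(3)] by simp
  qed
qed

lemma oddp_base:
  assumes "inj_on p {..<h}" "\<sigma>0 permutes {..<h}" "\<forall>i<h. repr h p i = p (\<sigma>0 i)"
  shows "oddp h p \<longleftrightarrow> \<not> evenperm \<sigma>0"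
proof
  assume "oddp h p"
  then obtain \<sigma> where s: "\<sigma> permutes {..<h}" "\<not> evenperm \<sigma>" "\<forall>i<h. repr h p i = p (\<sigma> i)"
    unfolding oddp_def by blast
  have "\<sigma> = \<sigma>0" using perm_uniq[OF assms(1) s(1) assms(2)] s(3) assms(3) by simp
  thus "\<not> evenperm \<sigma>0" using s(2) by simp
next
  assume "\<not> evenperm \<sigma>0" thus "oddp h p" using assms(2,3) unfolding oddp_def by blast
qed

lemma inj_transfer:
  assumes "\<phi> permutes {..<h}" "\<forall>i<h. p' i = p (\<phi> i)" "inj_on p {..<h}"
  shows "inj_on p' {..<h}"
  unfolding inj_on_def
proof (intro ballI impI)
  fix x y assume xy: "x \<in> {..<h}" "y \<in> {..<h}" "p' x = p' y"
  hence "p (\<phi> x) = p (\<phi> y)" using assms(2) by simp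
  hence "\<phi> x = \<phi> y" using assms(3) perm_lt[OF assms(1)] xy(1,2) unfolding inj_on_def by simp
  thus "x = y" using permutes_inj[OF assms(1)] unfolding inj_def by blast
qed

lemma oddp_trans:
  assumes "\<phi> permutes {..<h}" "\<forall>i<h. p' i = p (\<phi> i)" "inj_on p {..<h}"
  shows "oddp h p' \<longleftrightarrow> (oddp h p \<longleftrightarrow> evenperm \<phi>)"
proof -
  have rr: "repr h p' = repr h p" unfolding repr_def using orbR_cong[OF assms(1,2)] by simp
  obtain \<sigma>0 where s0: "\<sigma>0 permutes {..<h}" "\<forall>i<h. repr h p i = p (\<sigma>0 i)"
    using repr_in[of h p] unfolding orbR_def by blast
  have ip': "inj_on p' {..<h}" using inj_transfer[OF assms] .
  define \<sigma>1 where "\<sigma>1 = inv \<phi> \<circ> \<sigma>0"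
  have s1p: "\<sigma>1 permutes {..<h}" unfolding \<sigma>1_def using s0(1) permutes_inv[OF assms(1)] by (rule permutes_compose)
  have s1: "\<forall>i<h. repr h p' i = p' (\<sigma>1 i)"
    using s0 assms(2) rr perm_lt[OF s0(1)] perm_inv_lt[OF assms(1)] permutes_inverses(1)[OF assms(1)]
    unfolding \<sigma>1_def by simp
  have e1: "evenperm \<sigma>1 \<longleftrightarrow> (evenperm \<phi> \<longleftrightarrow> evenperm \<sigma>0)" unfolding \<sigma>1_def
    using perm_ev[OF s0(1)] perm_ev[OF assms(1)] permutes_inv[OF assms(1)] perm_ev
    by (simp add: evenperm_comp evenperm_inv)
  show ?thesis using oddp_base[OF ip' s1p s1] oddp_base[OF assms(3) s0] e1 by blast
qed

lemma act_rel:
  assumes "\<phi> permutes {..<h}"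
  shows "\<forall>i<h. act h p (\<phi>, id) i = p (inv \<phi> i)"
  using act_id by simp

lemma act_rel_back:
  assumes "\<phi> permutes {..<h}"
  shows "\<forall>i<h. p i = act h p (\<phi>, id) (\<phi> i)"
  using act_id perm_lt[OF assms] permutes_inverses(2)[OF assms] by simp

lemma transp_ne: "transpose (0::nat) 1 \<noteq> id"
proof
  assume "transpose (0::nat) 1 = id"
  hence "transpose (0::nat) 1 0 = id 0" by simp
  thus False by simp
qed

lemma Fc_parity:
  assumes "\<phi> permutes {..<h}"
  shows "(evenperm \<phi> \<longrightarrow> Fc h (act h p (\<phi>, id)) = Fc h p) \<and> (inj_on p {..<h} \<and> \<not> evenperm \<phi> \<longrightarrow>
           Fc h (act h p (\<phi>, id)) \<noteq> Fc h p)"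
proof -
  define p' where "p' = act h p (\<phi>, id)"
  have ip: "inv \<phi> permutes {..<h}" using assms by (rule permutes_inv)
  have r1: "\<forall>i<h. p' i = p (inv \<phi> i)" unfolding p'_def using act_rel[OF assms] .
  have r2: "\<forall>i<h. p i = p' (\<phi> i)" unfolding p'_def using act_rel_back[OF assms] .
  have ev: "evenperm (inv \<phi>) = evenperm \<phi>" using perm_ev[OF assms] by (simp add: evenperm_inv)
  show ?thesis
  proof (cases "inj_on p {..<h}")
    case False
    hence "\<not> inj_on p' {..<h}" using inj_transfer[OF assms r2] by blast
    then show ?thesis using False unfolding p'_def Fc_def by simp
  next
    case True
    have i': "inj_on p' {..<h}" using inj_transfer[OF ip r1 True] .
    have o: "oddp h p' \<longleftrightarrow> (oddp h p \<longleftrightarrow> evenperm \<phi>)" using oddp_trans[OF ip r1 True] ev by simp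
    show ?thesis
    proof (cases "evenperm \<phi>")
      case True
      then show ?thesis using o i' \<open>inj_on p {..<h}\<close> unfolding p'_def Fc_def by simp
    next
      case False
      then show ?thesis using o i' \<open>inj_on p {..<h}\<close> transp_ne unfolding p'_def Fc_def by auto
    qed
  qed
qed

lemma part3b:
  assumes "h \<ge> 2" "n \<ge> 2" "h \<le> fact n"
  shows "anonymity_group h n (Ah_id h)"
  unfolding anonymity_group_def
proof (intro conjI exI)
  show "Ah_id h \<subseteq> Sh_id h" by (rule Ah_Sh)
  show "is_subgroup h n (Ah_id h)" by (rule Ah_sub)
  have tp: "transpose (0::nat) 1 permutes {..<n}" using assms(2) by (intro permutes_swap_id) auto
  show "is_SPF h n (Fc h)" unfolding is_SPF_def Fc_def using tp by simp
  show "Ah_id h = G1F h n (Fc h)"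
  proof
    show "Ah_id h \<subseteq> G1F h n (Fc h)"
    proof
      fix g assume "g \<in> Ah_id h"
      then obtain \<phi> where g: "g = (\<phi>, id)" "\<phi> permutes {..<h}" "evenperm \<phi>" unfolding Ah_id_def by blast
      have "\<forall>p\<in>profiles h n. Fc h (act h p g) = snd g \<circ> Fc h p"
        using Fc_parity[OF g(2)] g(1,3) by auto
      moreover have "g \<in> Gh h n" using g unfolding Gh_def by auto
      moreover have "g \<in> Sh_id h" using g unfolding Sh_id_def by auto
      ultimately show "g \<in> G1F h n (Fc h)" unfolding G1F_def GF_def by blast
    qed
  next
    show "G1F h n (Fc h) \<subseteq> Ah_id h"
    proof
      fix g assume gG: "g \<in> G1F h n (Fc h)"
      then obtain \<phi> where g: "g = (\<phi>, id)" "\<phi> permutes {..<h}" unfolding G1F_def Sh_id_def by blast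
      have inv: "\<forall>p\<in>profiles h n. Fc h (act h p g) = Fc h p" using gG g(1) unfolding G1F_def GF_def by auto
      have "evenperm \<phi>"
      proof (rule ccontr)
        assume ne: "\<not> evenperm \<phi>"
        obtain p where p: "p \<in> profiles h n" "inj_on p {..<h}" using inj_profile[OF assms(3)] by blast
        have "Fc h (act h p (\<phi>, id)) = Fc h p" using inv p g(1) by simp
        moreover have "Fc h (act h p (\<phi>, id)) \<noteq> Fc h p"
          using Fc_parity[OF g(2), of p] ne p(2) by blast
        ultimately show False by blast
      qed
      thus "g \<in> Ah_id h" using g unfolding Ah_id_def by blast
    qed
  qed
qed

theorem mainTheorem18:
  fixes h n :: nat
  assumes "h \<ge> 2" and "n \<ge> 2"
  shows "(h \<le> fact n \<longrightarrow> Ogrp h n (Ah_id h) = Ah_id h)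
       \<and> (h > fact n \<longrightarrow> Ogrp h n (Ah_id h) = Sh_id h)
       \<and> (anonymity_group h n (Ah_id h) \<longleftrightarrow> h \<le> fact n)"
proof -
  have h1: "h \<ge> 1" using assms(1) by simp
  show ?thesis using part1[OF h1] part2[OF h1] part3a[OF assms(1)] part3b[OF assms] by blast
qed

end
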